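(* Let $F$ be an imaginary cyclic sextic field. Let $x,y,z\in\mathbb{R}$ with $x+y+z=0$, $u=(e^x,e^y,e^z)$, and $\|w\|^2=2(x^2+y^2+z^2)$. If $\|w\|^2\in(0,0.24163^2)$, then $T_1(u)<-98.4664\cdot 10^{-9}\cdot\#\mu_F$.
   Context: $F$ is a totally imaginary number field Galois over $\mathbb{Q}$ with cyclic Galois group $\langle\tau\rangle$ of order 6, embeddings $\tau_1=\mathrm{id},\tau_2=\tau,\tau_3=\tau^2$, ring of integers $O_F$, roots of unity $\mu_F$, and $\|f\|^2=2\sum_{i=1}^3|\tau_i(f)|^2$. For $f\in O_F$ let $f_i=|\tau_i(f)|$ and $G_1(u,f)=\exp\!\big(-2\pi[(e^{2x}-1)f_1^2+(e^{2y}-1)f_2^2+(e^{2z}-1)f_3^2]\big)-1$; $G_2(u,f)=G_1(u,\tau_1(f))+G_1(u,\tau_2(f))+G_1(u,\tau_3(f))$; $G(u,f)=e^{-\pi\|f\|^2}G_2(u,f)/\|w\|^2$. Then $T_1(u)=\sum_{f\in\mu_F}G(u,f)=\#\mu_F\cdot G(u,1)$. *)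

theory Defs
  imports "HOL-Analysis.Analysis"
begin

definition is_subfield :: "complex set \<Rightarrow> bool" where
  "is_subfield F \<longleftrightarrow> 0 \<in> F \<and> 1 \<in> F \<and>
     (\<forall>a\<in>F. \<forall>b\<in>F. a + b \<in> F \<and> a - b \<in> F \<and> a * b \<in> F) \<and>
     (\<forall>a\<in>F. a \<noteq> 0 \<longrightarrow> inverse a \<in> F)"

definition is_field_aut :: "complex set \<Rightarrow> (complex \<Rightarrow> complex) \<Rightarrow> bool" where
  "is_field_aut F s \<longleftrightarrow> bij_betw s F F \<and>
     (\<forall>a\<in>F. \<forall>b\<in>F. s (a + b) = s a + s b \<and> s (a * b) = s a * s b) \<and> s 1 = 1"

definition degree_over_Q :: "complex set \<Rightarrow> nat \<Rightarrow> bool" where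
  "degree_over_Q F d \<longleftrightarrow> (\<exists>b :: nat \<Rightarrow> complex. (\<forall>i<d. b i \<in> F) \<and>
     (\<forall>f\<in>F. \<exists>!c :: nat \<Rightarrow> rat. (\<forall>i\<ge>d. c i = 0) \<and> f = (\<Sum>i<d. of_rat (c i) * b i)))"

text \<open>Since F is normal,
  every embedding has image F, so totally imaginary means F is not contained in R.\<close>
definition imag_cyclic_sextic :: "complex set \<Rightarrow> (complex \<Rightarrow> complex) \<Rightarrow> bool" where
  "imag_cyclic_sextic F \<tau> \<longleftrightarrow> is_subfield F \<and> degree_over_Q F 6 \<and>
     is_field_aut F \<tau> \<and>
     (\<forall>f\<in>F. (\<tau> ^^ 6) f = f) \<and>
     (\<forall>k\<in>{1..5::nat}. \<exists>f\<in>F. (\<tau> ^^ k) f \<noteq> f) \<and>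
     (\<forall>\<sigma>. is_field_aut F \<sigma> \<longrightarrow> (\<exists>k<6. \<forall>f\<in>F. \<sigma> f = (\<tau> ^^ k) f)) \<and>
     (\<exists>f\<in>F. Im f \<noteq> 0)"

definition muF :: "complex set \<Rightarrow> complex set" where
  "muF F = {f \<in> F. \<exists>n::nat. n > 0 \<and> f ^ n = 1}"

definition emb :: "(complex \<Rightarrow> complex) \<Rightarrow> nat \<Rightarrow> complex \<Rightarrow> complex" where
  "emb \<tau> i = \<tau> ^^ (i - 1)"

definition normsq :: "(complex \<Rightarrow> complex) \<Rightarrow> complex \<Rightarrow> real" where
  "normsq \<tau> f = 2 * (\<Sum>i\<in>{1..3}. (cmod (emb \<tau> i f))\<^sup>2)"

definition wnormsq :: "real \<Rightarrow> real \<Rightarrow> real \<Rightarrow> real" where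
  "wnormsq x y z = 2 * (x\<^sup>2 + y\<^sup>2 + z\<^sup>2)"

text \<open>G_1(u,f) with u = (e^x, e^y, e^z).\<close>
definition G1 :: "(complex \<Rightarrow> complex) \<Rightarrow> real \<Rightarrow> real \<Rightarrow> real \<Rightarrow> complex \<Rightarrow> real" where
  "G1 \<tau> x y z f = exp (- 2 * pi * ((exp (2*x) - 1) * (cmod (emb \<tau> 1 f))\<^sup>2
        + (exp (2*y) - 1) * (cmod (emb \<tau> 2 f))\<^sup>2 + (exp (2*z) - 1) * (cmod (emb \<tau> 3 f))\<^sup>2)) - 1"

definition G2 :: "(complex \<Rightarrow> complex) \<Rightarrow> real \<Rightarrow> real \<Rightarrow> real \<Rightarrow> complex \<Rightarrow> real" where
  "G2 \<tau> x y z f = G1 \<tau> x y z (emb \<tau> 1 f) + G1 \<tau> x y z (emb \<tau> 2 f) + G1 \<tau> x y z (emb \<tau> 3 f)"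

definition G :: "(complex \<Rightarrow> complex) \<Rightarrow> real \<Rightarrow> real \<Rightarrow> real \<Rightarrow> complex \<Rightarrow> real" where
  "G \<tau> x y z f = exp (- pi * normsq \<tau> f) * G2 \<tau> x y z f / wnormsq x y z"

definition T1 :: "complex set \<Rightarrow> (complex \<Rightarrow> complex) \<Rightarrow> real \<Rightarrow> real \<Rightarrow> real \<Rightarrow> real" where
  "T1 F \<tau> x y z = (\<Sum>f\<in>muF F. G \<tau> x y z f)"

end

theory Submission
  imports Defs "Berlekamp_Zassenhaus.Factor_Bound"
begin


lemma exp_ge_taylor3: "1 + t + t^2/2 + t^3/6 \<le> exp (t::real)"
proof -
  obtain s where s: "exp t = (\<Sum>m<4. t ^ m / fact m) + (exp s / fact 4) * t ^ 4"
    using Maclaurin_exp_le[of t 4] by blast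
  have "(\<Sum>m<4. t ^ m / fact m) = 1 + t + t^2/2 + t^3/6"
    by (simp add: eval_nat_numeral fact_numeral)
  moreover have "(exp s / fact 4) * t ^ 4 \<ge> 0" by (simp add: zero_le_even_power)
  ultimately show ?thesis using s by linarith
qed

lemma exp_neg_le_taylor4: assumes "(0::real) \<le> u"
  shows "exp (-u) \<le> 1 - u + u^2/2 - u^3/6 + u^4/24"
proof -
  obtain s where s: "exp (-u) = (\<Sum>m<5. (-u) ^ m / fact m) + (exp s / fact 5) * (-u) ^ 5"
    using Maclaurin_exp_le[of "-u" 5] by blast
  have "(\<Sum>m<5. (-u) ^ m / fact m) = 1 - u + u^2/2 - u^3/6 + u^4/24"
    by (simp add: eval_nat_numeral fact_numeral)
  moreover have "(exp s / fact 5) * (-u) ^ 5 \<le> 0" using assms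
    by (simp add: mult_nonneg_nonpos)
  ultimately show ?thesis using s by linarith
qed

lemma exp_neg_6pi: "exp (- pi * 6) \<ge> 6.5 * 10 powi (-9)"
proof -
  define y :: real where "y = 0.5890486225482"
  have py: "pi * 6 \<le> 32 * y" using pi_approx(2) unfolding y_def by simp
  obtain s where s: "exp (-y) = (\<Sum>m<8. (-y) ^ m / fact m) + (exp s / fact 8) * (-y) ^ 8"
    using Maclaurin_exp_le[of "-y" 8] by blast
  have "(\<Sum>m<8. (-y) ^ m / fact m) \<ge> 0.55485"
    unfolding y_def by (simp add: eval_nat_numeral fact_numeral)
  moreover have "(exp s / fact 8) * (-y) ^ 8 \<ge> 0" by (simp add: zero_le_even_power)
  ultimately have ey: "exp (-y) \<ge> 0.55485" using s by linarith
  have "exp (- pi * 6) \<ge> exp (- (32 * y))" using py by simp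
  also have "exp (- (32 * y)) = exp (-y) ^ 32" by (simp add: exp_of_nat_mult[symmetric])
  also have "exp (-y) ^ 32 \<ge> 0.55485 ^ 32" using ey by (intro power_mono) auto
  finally have "exp (- pi * 6) \<ge> 0.55485 ^ 32" .
  moreover have "(0.55485::real) ^ 32 \<ge> 6.5 * 10 powi (-9)" by (simp add: power_int_def power_divide)
  ultimately show ?thesis by linarith
qed

lemma S_lower:
  fixes x y z :: real
  assumes sum0: "x + y + z = 0" and W0: "wnormsq x y z < 0.24163 ^ 2"
  shows "(exp (2*x) - 1) + (exp (2*y) - 1) + (exp (2*z) - 1) \<ge> 0.953 * wnormsq x y z"
proof -
  define P where "P = x^2 + y^2 + z^2"
  define q where "q = x*y*z"
  have W: "wnormsq x y z = 2 * P" unfolding wnormsq_def P_def by simp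
  have z: "z = -x-y" using sum0 by linarith
  have e1: "exp (2*x) \<ge> 1 + 2*x + (2*x)^2/2 + (2*x)^3/6" by (rule exp_ge_taylor3)
  have e2: "exp (2*y) \<ge> 1 + 2*y + (2*y)^2/2 + (2*y)^3/6" by (rule exp_ge_taylor3)
  have e3: "exp (2*z) \<ge> 1 + 2*z + (2*z)^2/2 + (2*z)^3/6" by (rule exp_ge_taylor3)
  have cub: "(2*x)^2/2 + (2*y)^2/2 + (2*z)^2/2 + ((2*x)^3/6 + (2*y)^3/6 + (2*z)^3/6) = 2*P + 4*q"
    unfolding P_def q_def z by (simp add: field_simps power2_eq_square power3_eq_cube)
  have Slow: "(exp (2*x) - 1) + (exp (2*y) - 1) + (exp (2*z) - 1) \<ge> 2*P + 4*q"
    using e1 e2 e3 cub sum0 by linarith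
  have disc: "P^3 - 54 * q^2 = 2 * ((x-y)*(y-z)*(z-x))^2"
    unfolding P_def q_def z by (simp add: field_simps power2_eq_square power3_eq_cube)
  have P0: "P \<ge> 0" unfolding P_def by simp
  have Pb: "P \<le> 0.0292" using W W0 by (simp add: power2_eq_square)
  have "54 * q^2 \<le> P^3" using disc by (smt (verit) zero_le_power2 mult_nonneg_nonneg)
  also have "P^3 = P^2 * P" by (simp add: power3_eq_cube power2_eq_square)
  also have "\<dots> \<le> P^2 * 0.0292" using Pb by (intro mult_left_mono) auto
  finally have "54 * q^2 \<le> P^2 * 0.0292" .
  moreover have "(0.0235 * P)^2 = 0.00055225 * P^2" by (simp add: power2_eq_square)
  moreover have "P^2 \<ge> 0" by simp
  ultimately have "q^2 * 135000 \<le> P^2 * 73" by (simp add: field_simps)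
  hence "q^2 * 4000000 \<le> P^2 * 2209" using zero_le_power2[of P] by linarith
  hence "q^2 \<le> (0.0235 * P)^2" by (simp add: field_simps)
  hence "\<bar>q\<bar> \<le> \<bar>0.0235 * P\<bar>" using abs_le_square_iff by blast
  hence "q \<ge> -0.0235 * P" using P0 by simp
  hence q2: "q \<ge> -(47/2000) * P" by simp
  have "(0.953::real) * wnormsq x y z = 953/1000 * (2*P)" using W by simp
  thus ?thesis using Slow q2 by linarith
qed

lemma main_analytic:
  fixes x y z :: real
  assumes sum0: "x + y + z = 0" and Wpos: "0 < wnormsq x y z" and W0: "wnormsq x y z < 0.24163 ^ 2"
  shows "exp (- pi * 6) * (3 * (exp (- 2 * pi * ((exp (2*x) - 1) + (exp (2*y) - 1) + (exp (2*z) - 1))) - 1))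
     / wnormsq x y z < - 98.4664 * 10 powi (-9)"
proof -
  define W where "W = wnormsq x y z"
  define S where "S = (exp (2*x) - 1) + (exp (2*y) - 1) + (exp (2*z) - 1)"
  define u where "u = 2 * pi * 0.953 * W"
  have Wp: "W > 0" using Wpos W_def by simp
  have Wb: "W \<le> 0.0583850569" using W0 W_def by (simp add: power2_eq_square)
  have SW: "S \<ge> 0.953 * W" unfolding S_def W_def using S_lower[OF sum0 W0] .
  have u0: "u \<ge> 0" unfolding u_def using Wp by simp
  have "exp (- 2 * pi * S) \<le> exp (- u)" unfolding u_def using SW by simp
  also have "\<dots> \<le> 1 - u + u^2/2 - u^3/6 + u^4/24" by (rule exp_neg_le_taylor4[OF u0])
  finally have e0: "exp (- 2 * pi * S) \<le> 1 - u + u^2/2 - u^3/6 + u^4/24" .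
  have e: "exp (- 2 * pi * S) - 1 \<le> - (u * (1 - u/2 + u^2/6 - u^3/24))"
  proof -
    have "1 - u + u^2/2 - u^3/6 + u^4/24 - 1 = - (u * (1 - u/2 + u^2/6 - u^3/24))"
      by (simp add: algebra_simps power2_eq_square power3_eq_cube power4_eq_xxxx)
    thus ?thesis using e0 by linarith
  qed
  have "pi * W \<le> 3.1415926535899 * 0.0583850569"
    using pi_approx(2) Wb Wp by (intro mult_mono) auto
  hence ub: "u \<le> 0.3498" unfolding u_def by simp
  define U :: real where "U = 0.3498"
  have k: "1 - u/2 + u^2/6 - u^3/24 \<ge> 0.84365"
  proof -
    have id: "(1 - u/2 + u^2/6 - u^3/24) - (1 - U/2 + U^2/6 - U^3/24)
       = (U - u) * (1/2 - (u+U)/6 + (u^2 + u*U + U^2)/24)"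
      by (simp add: field_simps power2_eq_square power3_eq_cube)
    have sq: "u^2 + u*U + U^2 \<ge> 0" using u0 unfolding U_def by simp
    have "(1/2 - (u+U)/6 + (u^2 + u*U + U^2)/24) \<ge> 0" using u0 ub sq unfolding U_def by simp
    moreover have "U - u \<ge> 0" using ub U_def by simp
    ultimately have "(U - u) * (1/2 - (u+U)/6 + (u^2 + u*U + U^2)/24) \<ge> 0" by simp
    moreover have "1 - U/2 + U^2/6 - U^3/24 \<ge> 0.84365" unfolding U_def by (simp add: power_divide)
    ultimately show ?thesis using id by linarith
  qed
  have "u * 0.84365 \<le> u * (1 - u/2 + u^2/6 - u^3/24)" using k u0 by (intro mult_left_mono) auto
  hence e2: "exp (- 2 * pi * S) - 1 \<le> - (u * 0.84365)" using e by linarith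
  have "(exp (- 2 * pi * S) - 1) / W \<le> (- (u * 0.84365)) / W"
    by (rule divide_right_mono[OF e2]) (use Wp in simp)
  also have "(- (u * 0.84365)) / W = - (2 * pi * 0.953 * 0.84365)" unfolding u_def using Wp by simp
  finally have r: "(exp (- 2 * pi * S) - 1) / W \<le> - (2 * pi * 0.953 * 0.84365)" .
  have r2: "(exp (- 2 * pi * S) - 1) / W \<le> - 5.0516" using r pi_approx(1) by simp
  have E: "exp (- pi * 6) \<ge> 6.5 * 10 powi (-9)" by (rule exp_neg_6pi)
  have "exp (- pi * 6) * (3 * (exp (- 2 * pi * S) - 1)) / W
      = 3 * exp (- pi * 6) * ((exp (- 2 * pi * S) - 1) / W)" by simp
  also have "\<dots> \<le> 3 * exp (- pi * 6) * (- 5.0516)"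
    using r2 by (intro mult_left_mono) auto
  also have "\<dots> \<le> 3 * (6.5 * 10 powi (-9)) * (- 5.0516)" using E by simp
  also have "\<dots> < - 98.4664 * 10 powi (-9)" by (simp add: power_int_def)
  finally show ?thesis unfolding S_def W_def .
qed



interpretation Qvs: vector_space "\<lambda>(r::rat) (z::complex). of_rat r * z"
  by unfold_locales (simp_all add: algebra_simps of_rat_add of_rat_mult)

lemma subfield_pow: "is_subfield F \<Longrightarrow> a \<in> F \<Longrightarrow> a ^ n \<in> F"
  by (induction n) (auto simp: is_subfield_def)

lemma rat_root_to_int:
  fixes p :: "rat poly" and \<zeta> :: complex
  assumes "p \<noteq> 0" "degree p \<le> 6" "poly (map_poly of_rat p) \<zeta> = 0"
  shows "\<exists>ip::int poly. ip \<noteq> 0 \<and> degree ip \<le> 6 \<and> poly (map_poly of_int ip) \<zeta> = 0"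
proof -
  obtain d ip where dq: "rat_to_normalized_int_poly p = (d, ip)" by force
  note r = rat_to_normalized_int_poly[OF dq]
  have mm: "map_poly (of_rat :: rat \<Rightarrow> complex) (map_poly of_int ip) = map_poly of_int ip"
    by (subst map_poly_map_poly) (auto simp: o_def of_rat_of_int_eq)
  have "poly (map_poly of_rat p) \<zeta> = of_rat d * poly (map_poly of_int ip) \<zeta>"
    by (subst r(1)) (simp add: hom_distribs mm)
  with assms(3) r(2) have "poly (map_poly of_int ip) \<zeta> = 0" by simp
  moreover have "ip \<noteq> 0" using r(1) assms(1) by auto
  moreover have "degree ip \<le> 6" using r(4) assms(2) by simp
  ultimately show ?thesis by blast
qed

lemma exists_int_poly:
  assumes sf: "is_subfield F" and dg: "degree_over_Q F 6" and zF: "\<zeta> \<in> F"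
  shows "\<exists>ip::int poly. ip \<noteq> 0 \<and> degree ip \<le> 6 \<and> poly (map_poly of_int ip) \<zeta> = 0"
proof -
  obtain b where b: "\<forall>i<6. b i \<in> F" and rep: "\<forall>f\<in>F. \<exists>!c :: nat \<Rightarrow> rat. (\<forall>i\<ge>6. c i = 0) \<and> f = (\<Sum>i<6. of_rat (c i) * b i)"
    using dg unfolding degree_over_Q_def by blast
  define B where "B = b ` {..<6}"
  have finB: "finite B" unfolding B_def by simp
  have cardB: "card B \<le> 6" unfolding B_def using card_image_le[of "{..<6::nat}" b] by simp
  have FB: "F \<subseteq> Qvs.span B"
  proof
    fix f assume "f \<in> F"
    then obtain c :: "nat \<Rightarrow> rat" where c: "f = (\<Sum>i<6. of_rat (c i) * b i)" using rep by blast
    show "f \<in> Qvs.span B" unfolding c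
      by (intro Qvs.span_sum Qvs.span_scale Qvs.span_base) (auto simp: B_def)
  qed
  show ?thesis
  proof (cases "inj_on (\<lambda>j. \<zeta> ^ j) {..6::nat}")
    case True
    define S where "S = (\<lambda>j. \<zeta> ^ j) ` {..6::nat}"
    have finS: "finite S" unfolding S_def by simp
    have cardS: "card S = 7" using True by (simp add: S_def card_image)
    have SF: "S \<subseteq> F" unfolding S_def using subfield_pow[OF sf zF] by auto
    have "Qvs.dim S \<le> card B" by (rule Qvs.dim_le_card) (use FB SF finB in auto)
    have "Qvs.dependent S"
    proof (rule ccontr)
      assume "\<not> Qvs.dependent S"
      hence "Qvs.dim S = card S" by (rule Qvs.dim_eq_card_independent)
      with \<open>Qvs.dim S \<le> card B\<close> cardB cardS show False by simp
    qed
    then obtain u where u1: "\<exists>v\<in>S. u v \<noteq> 0" and u2: "(\<Sum>v\<in>S. of_rat (u v) * v) = 0"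
      using Qvs.dependent_finite[OF finS] by blast
    define p :: "rat poly" where "p = (\<Sum>j\<le>6. Polynomial.monom (u (\<zeta> ^ j)) j)"
    have coeffp: "poly.coeff p k = (if k \<le> 6 then u (\<zeta> ^ k) else 0)" for k
      by (simp add: p_def coeff_sum coeff_monom)
    have "p \<noteq> 0"
    proof
      assume "p = 0"
      from u1 obtain j where "j \<le> 6" "u (\<zeta> ^ j) \<noteq> 0" unfolding S_def by auto
      with coeffp[of j] \<open>p = 0\<close> show False by simp
    qed
    moreover have "degree p \<le> 6" by (rule degree_le) (simp add: coeffp)
    moreover have "poly (map_poly of_rat p) \<zeta> = 0"
    proof -
      define pc :: "complex poly" where "pc = (\<Sum>j\<le>6. Polynomial.monom (of_rat (u (\<zeta> ^ j))) j)"
      have "map_poly of_rat p = pc"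
        by (rule poly_eqI) (simp add: coeff_map_poly coeffp pc_def coeff_sum coeff_monom)
      moreover have "poly pc \<zeta> = (\<Sum>j\<le>6. of_rat (u (\<zeta> ^ j)) * \<zeta> ^ j)"
        by (simp add: pc_def poly_sum poly_monom)
      moreover have "(\<Sum>j\<le>6. of_rat (u (\<zeta> ^ j)) * \<zeta> ^ j) = (\<Sum>v\<in>S. of_rat (u v) * v)"
        unfolding S_def by (subst sum.reindex[OF True]) simp
      ultimately show ?thesis using u2 by simp
    qed
    ultimately show ?thesis by (rule rat_root_to_int)
  next
    case False
    then obtain i j where ij: "i \<le> 6" "j \<le> 6" "i < j" "\<zeta> ^ i = \<zeta> ^ j"
      unfolding inj_on_def by (metis atMost_iff linorder_neqE_nat)
    define ip :: "int poly" where "ip = Polynomial.monom 1 j - Polynomial.monom 1 i"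
    have "poly.coeff ip j = 1" using ij by (simp add: ip_def coeff_monom)
    hence "ip \<noteq> 0" by auto
    moreover have "degree ip \<le> 6" unfolding ip_def using ij
      by (intro degree_diff_le) (auto simp: degree_monom_eq)
    moreover have "poly (map_poly of_int ip) \<zeta> = 0"
      using ij by (simp add: ip_def hom_distribs poly_monom)
    ultimately show ?thesis by blast
  qed
qed

interpretation of_rat_poly_hom: map_poly_comm_ring_hom "of_rat :: rat \<Rightarrow> complex" ..

lemma of_rat_of_int_poly: "map_poly (of_rat :: rat \<Rightarrow> complex) (map_poly of_int h) = map_poly of_int h"
  by (subst map_poly_map_poly) (auto simp: o_def of_rat_of_int_eq)

lemma bounded_root:
  fixes \<zeta> :: complex and n :: nat and ip :: "int poly"
  assumes zn: "\<zeta> ^ n = 1" and n0: "n > 0" and ip0: "ip \<noteq> 0" and dip: "degree ip \<le> 6"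
    and rt: "poly (map_poly of_int ip) \<zeta> = 0"
  shows "\<exists>g::int poly. g \<noteq> 0 \<and> degree g \<le> 6 \<and> (\<forall>k. \<bar>poly.coeff g k\<bar> \<le> 64)
           \<and> poly (map_poly of_int g) \<zeta> = 0"
proof -
  define f :: "int poly" where "f = Polynomial.monom 1 n - 1"
  have cf: "poly (map_poly of_int f) z = z ^ n - 1" for z :: complex
    by (simp add: f_def hom_distribs poly_monom)
  have cfn: "poly.coeff f n = 1" using n0 by (simp add: f_def coeff_monom)
  have "degree f \<le> n" unfolding f_def by (intro degree_diff_le) (auto simp: degree_monom_eq)
  moreover have "n \<le> degree f" using cfn by (intro le_degree) simp
  ultimately have degf: "degree f = n" by simp
  have lcf: "lead_coeff f = 1" using degf n0 by (simp add: f_def coeff_monom)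
  have f0: "f \<noteq> 0" using lcf by auto
  define g where "g = gcd ip f"
  have g0: "g \<noteq> 0" unfolding g_def using ip0 by simp
  have gip: "g dvd ip" and gf: "g dvd f" unfolding g_def by auto
  have dg: "degree g \<le> 6" using dvd_imp_degree_le[OF gip ip0] dip by simp
  have lcg0: "lead_coeff g \<noteq> 0" using g0 by simp
  have root: "poly (map_poly of_int g) \<zeta> = 0"
  proof -
    define A where "A = (map_poly of_int ip :: rat poly)"
    define Bp where "Bp = (map_poly of_int f :: rat poly)"
    have bz: "fst (bezout_coefficients A Bp) * A + snd (bezout_coefficients A Bp) * Bp = gcd A Bp"
      by (rule bezout_coefficients_fst_snd)
    have gg: "gcd A Bp = Polynomial.smult (inverse (of_int (lead_coeff g))) (map_poly of_int g)"
      unfolding A_def Bp_def g_def by (rule gcd_rat_to_gcd_int)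
    have "poly (map_poly (of_rat :: rat \<Rightarrow> complex) (gcd A Bp)) \<zeta> = 0"
      unfolding bz[symmetric] by (simp add: hom_distribs A_def Bp_def of_rat_of_int_poly rt cf zn)
    hence "of_rat (inverse (of_int (lead_coeff g))) * poly (map_poly of_int g) \<zeta> = (0::complex)"
      unfolding gg by (simp add: hom_distribs of_rat_of_int_poly)
    thus ?thesis using lcg0 by simp
  qed
  obtain h where fgh: "f = g * h" using gf by (elim dvdE)
  have "lead_coeff g * lead_coeff h = 1" using lcf fgh by (simp add: lead_coeff_mult)
  hence alc: "\<bar>lead_coeff g\<bar> = 1" by (auto simp: zmult_eq_1_iff)
  define G where "G = (map_poly of_int g :: complex poly)"
  define rs where "rs = complex_roots_complex G"
  have rG: "poly G a = 0" if "a \<in> set rs" for a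
  proof -
    have "poly G a = poly (Polynomial.smult (lead_coeff G) (\<Prod>a\<leftarrow>rs. [:- a, 1:])) a"
      unfolding rs_def using complex_roots(1)[of G] by simp
    also have "\<dots> = 0" using that by (auto simp: poly_prod_list prod_list_zero_iff o_def)
    finally show ?thesis .
  qed
  have unit: "cmod a = 1" if "a \<in> set rs" for a
  proof -
    have "poly (map_poly of_int f) a = poly G a * poly (map_poly of_int h) a"
      unfolding fgh G_def by (simp add: hom_distribs)
    hence "a ^ n = 1" using rG[OF that] cf[of a] by simp
    hence "cmod a ^ n = 1" by (metis norm_one norm_power)
    thus ?thesis using power_eq_iff_eq_base[of n "cmod a" 1] n0 by simp
  qed
  have "map (\<lambda>a. max 1 (cmod a)) rs = map (\<lambda>a. 1) rs" using unit by (intro map_cong) auto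
  hence pl: "prod_list (map (\<lambda>a. max 1 (cmod a)) rs) = 1" by (simp add: map_replicate_const)
  have "cmod (lead_coeff G) = 1" unfolding G_def using alc by simp
  hence mm: "mahler_measure g = 1"
    unfolding mahler_measure_def mahler_measure_poly_def using pl by (simp add: G_def rs_def)
  have "\<forall>k. \<bar>poly.coeff g k\<bar> \<le> 64"
  proof
    fix k
    have "real_of_int \<bar>poly.coeff g k\<bar> \<le> real (degree g choose k) * mahler_measure g"
      by (rule Mignotte_bound)
    also have "\<dots> = real (degree g choose k)" using mm by simp
    also have "degree g choose k \<le> 2 ^ degree g" by (rule binomial_le_pow2)
    also have "(2::nat) ^ degree g \<le> 2 ^ 6" using dg by (intro power_increasing) auto
    finally have "real_of_int \<bar>poly.coeff g k\<bar> \<le> 64" by simp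
    thus "\<bar>poly.coeff g k\<bar> \<le> 64" by linarith
  qed
  thus ?thesis using g0 dg root by blast
qed

lemma finite_bounded_polys: "finite {g::int poly. degree g \<le> 6 \<and> (\<forall>k. \<bar>poly.coeff g k\<bar> \<le> 64)}"
proof -
  have "{g::int poly. degree g \<le> 6 \<and> (\<forall>k. \<bar>poly.coeff g k\<bar> \<le> 64)}
      \<subseteq> Poly ` {cs. set cs \<subseteq> {-64..64} \<and> length cs = 7}"
  proof
    fix g :: "int poly" assume g: "g \<in> {g. degree g \<le> 6 \<and> (\<forall>k. \<bar>poly.coeff g k\<bar> \<le> 64)}"
    define cs where "cs = map (poly.coeff g) [0..<7]"
    have "Poly cs = g"
    proof (rule poly_eqI)
      fix k
      show "poly.coeff (Poly cs) k = poly.coeff g k"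
      proof (cases "k < 7")
        case True thus ?thesis by (simp add: cs_def nth_default_def)
      next
        case False
        hence "poly.coeff g k = 0" using g by (intro coeff_eq_0) auto
        thus ?thesis using False by (simp add: cs_def nth_default_def)
      qed
    qed
    moreover have "set cs \<subseteq> {-64..64}"
    proof -
      have "-64 \<le> poly.coeff g k \<and> poly.coeff g k \<le> 64" for k
      proof -
        from g have "\<bar>poly.coeff g k\<bar> \<le> 64" by auto
        thus ?thesis by linarith
      qed
      thus ?thesis by (auto simp: cs_def)
    qed
    moreover have "length cs = 7" by (simp add: cs_def)
    ultimately show "g \<in> Poly ` {cs. set cs \<subseteq> {-64..64} \<and> length cs = 7}" by blast
  qed
  moreover have "finite (Poly ` {cs. set cs \<subseteq> {-64..64::int} \<and> length cs = 7})"
    by (intro finite_imageI finite_lists_length_eq) simp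
  ultimately show ?thesis by (rule finite_subset)
qed

lemma finite_muF:
  assumes sf: "is_subfield F" and dg: "degree_over_Q F 6"
  shows "finite (muF F)"
proof -
  define Bs where "Bs = {g::int poly. g \<noteq> 0 \<and> degree g \<le> 6 \<and> (\<forall>k. \<bar>poly.coeff g k\<bar> \<le> 64)}"
  have finBs: "finite Bs" unfolding Bs_def by (rule finite_subset[OF _ finite_bounded_polys]) auto
  have "muF F \<subseteq> (\<Union>g\<in>Bs. {z. poly (map_poly of_int g) z = (0::complex)})"
  proof
    fix z assume z: "z \<in> muF F"
    then obtain n where zF: "z \<in> F" and n: "n > 0" "z ^ n = 1" unfolding muF_def by auto
    obtain ip :: "int poly" where ip: "ip \<noteq> 0" "degree ip \<le> 6" "poly (map_poly of_int ip) z = 0"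
      using exists_int_poly[OF sf dg zF] by blast
    obtain g where "g \<noteq> 0 \<and> degree g \<le> 6 \<and> (\<forall>k. \<bar>poly.coeff g k\<bar> \<le> 64) \<and> poly (map_poly of_int g) z = 0"
      using bounded_root[OF n(2) n(1) ip] by blast
    thus "z \<in> (\<Union>g\<in>Bs. {z. poly (map_poly of_int g) z = 0})" unfolding Bs_def by blast
  qed
  moreover have "finite (\<Union>g\<in>Bs. {z. poly (map_poly of_int g) z = (0::complex)})"
  proof (intro finite_UN_I finBs)
    fix g assume "g \<in> Bs"
    hence "g \<noteq> 0" unfolding Bs_def by auto
    hence "map_poly (of_int :: int \<Rightarrow> complex) g \<noteq> 0" by simp
    thus "finite {z. poly (map_poly of_int g) z = (0::complex)}" by (rule poly_roots_finite)
  qed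
  ultimately show ?thesis by (rule finite_subset)
qed


lemma aut_in: "is_field_aut F s \<Longrightarrow> a \<in> F \<Longrightarrow> s a \<in> F"
  unfolding is_field_aut_def by (auto dest: bij_betw_apply)

lemma aut_pow:
  assumes sf: "is_subfield F" and au: "is_field_aut F s" and a: "a \<in> F"
  shows "s (a ^ n) = (s a) ^ n"
proof (induction n)
  case 0 thus ?case using au by (simp add: is_field_aut_def)
next
  case (Suc n)
  have "s (a ^ Suc n) = s (a * a ^ n)" by simp
  also have "\<dots> = s a * s (a ^ n)" using au a subfield_pow[OF sf a, of n]
    unfolding is_field_aut_def by blast
  finally show ?case using Suc by simp
qed

lemma iter_mu:
  assumes sf: "is_subfield F" and au: "is_field_aut F s" and f: "f \<in> F" and fn: "f ^ n = 1"
  shows "(s ^^ k) f \<in> F \<and> ((s ^^ k) f) ^ n = 1"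
proof (induction k)
  case 0 thus ?case using f fn by simp
next
  case (Suc k)
  hence inF: "(s ^^ k) f \<in> F" and pw: "((s ^^ k) f) ^ n = 1" by auto
  have "(s ^^ Suc k) f = s ((s ^^ k) f)" by simp
  moreover have "s ((s ^^ k) f) \<in> F" by (rule aut_in[OF au inF])
  moreover have "(s ((s ^^ k) f)) ^ n = 1"
    using aut_pow[OF sf au inF, of n] pw au by (simp add: is_field_aut_def)
  ultimately show ?case by simp
qed

theorem proposition8p4:
  fixes F :: "complex set" and \<tau> :: "complex \<Rightarrow> complex" and x y z :: real
  assumes "imag_cyclic_sextic F \<tau>"
    and "x + y + z = 0"
    and "0 < wnormsq x y z" and "wnormsq x y z < 0.24163 ^ 2"
  shows "T1 F \<tau> x y z < - 98.4664 * 10 powi (-9) * real (card (muF F))"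
proof -
  have sf: "is_subfield F" and dg: "degree_over_Q F 6" and au: "is_field_aut F \<tau>"
    using assms(1) unfolding imag_cyclic_sextic_def by auto
  have fin: "finite (muF F)" by (rule finite_muF[OF sf dg])
  have one: "1 \<in> muF F" using sf unfolding muF_def is_subfield_def by force
  have cpos: "card (muF F) > 0" using fin one by (auto simp: card_gt_0_iff)
  define C0 where "C0 = exp (- pi * 6) * (3 * (exp (- 2 * pi * ((exp (2*x) - 1) + (exp (2*y) - 1) + (exp (2*z) - 1))) - 1))
     / wnormsq x y z"
  have Gc: "G \<tau> x y z f = C0" if fm: "f \<in> muF F" for f
  proof -
    obtain n where fF: "f \<in> F" and n: "n > 0" "f ^ n = 1" using fm unfolding muF_def by auto
    have cm: "cmod ((\<tau> ^^ k) f) = 1" for k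
    proof -
      have "((\<tau> ^^ k) f) ^ n = 1" using iter_mu[OF sf au fF n(2)] by blast
      hence "cmod ((\<tau> ^^ k) f) ^ n = 1" by (metis norm_one norm_power)
      thus ?thesis using power_eq_iff_eq_base[of n "cmod ((\<tau> ^^ k) f)" 1] n(1) by simp
    qed
    have cm2: "cmod ((\<tau> ^^ a) ((\<tau> ^^ b) f)) = 1" for a b
      using cm[of "a + b"] by (simp add: funpow_add)
    have c0: "cmod f = 1" using cm[of 0] by simp
    have c1: "cmod (\<tau> f) = 1" using cm[of "Suc 0"] by simp
    have c2: "cmod (\<tau> (\<tau> f)) = 1" using cm[of "Suc (Suc 0)"] by simp
    have c3: "cmod (\<tau> (\<tau> (\<tau> f))) = 1" using cm[of "Suc (Suc (Suc 0))"] by simp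
    have c4: "cmod (\<tau> (\<tau> (\<tau> (\<tau> f)))) = 1" using cm[of "Suc (Suc (Suc (Suc 0)))"] by simp
    have d1: "cmod (\<tau> ((\<tau> ^^ k) f)) = 1" for k using cm[of "Suc k"] by simp
    have d2: "cmod ((\<tau> ^^ k) (\<tau> f)) = 1" for k using cm2[of k "Suc 0"] by simp
    have d3: "cmod (\<tau> ((\<tau> ^^ k) (\<tau> f))) = 1" for k using cm2[of "Suc k" "Suc 0"] by simp
    show ?thesis unfolding C0_def G_def G2_def G1_def normsq_def emb_def
      by (simp add: cm cm2 c0 c1 c2 c3 c4 d1 d2 d3)
  qed
  have "T1 F \<tau> x y z = (\<Sum>f\<in>muF F. C0)" unfolding T1_def using Gc by (intro sum.cong) auto
  also have "\<dots> = real (card (muF F)) * C0" by simp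
  finally have T: "T1 F \<tau> x y z = real (card (muF F)) * C0" .
  have C: "C0 < - 98.4664 * 10 powi (-9)" unfolding C0_def by (rule main_analytic[OF assms(2-4)])
  have "real (card (muF F)) * C0 < real (card (muF F)) * (- 98.4664 * 10 powi (-9))"
    using C cpos by (intro mult_strict_left_mono) auto
  thus ?thesis unfolding T by (simp add: mult.commute)
qed

end
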